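(* Let $1\le j\le s$ and $B>j$ be natural numbers and let $d=4s\sum_{1\le i\le j+1}B^i$. For all sufficiently large natural numbers $q$ there exists $\bar x\in\mathbb{N}^s$ such that for all $\bar a\in\{0,\dots,B-1\}^s$ and all $c\in\{0,\dots,B-1\}$: (a) if $\bar a\ne\bar 0$ then $\frac{q}{d}<\bar a^\top\bar x-c$; (b) $\bar a^\top\bar x-c<qd$; and (c) $\bar a^\top\bar x-c=q$ if and only if $\bar a=(1,\dots,1,0,\dots,0)$ (with exactly $j$ leading entries $1$) and $c=0$.
   Context: $\bar a^\top\bar x=\sum_{i=1}^s a_ix_i$. *)

theory Defs
  imports Complex_Main
begin

end

theory Submission
  imports Defs
begin

lemma digits_lt:
  fixes a :: "nat \<Rightarrow> nat" and B :: nat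
  shows "(\<forall>i<n. a i < B) \<Longrightarrow> (\<Sum>i<n. a i * B^i) < B^n"
proof (induction n)
  case 0 then show ?case by simp
next
  case (Suc n)
  have h1: "(\<Sum>i<n. a i * B^i) < B^n" using Suc by auto
  have h2: "a n + 1 \<le> B" using Suc.prems by auto
  have "(\<Sum>i<Suc n. a i * B^i) = (\<Sum>i<n. a i * B^i) + a n * B^n" by simp
  also have "\<dots> < B^n + a n * B^n" using h1 by simp
  also have "\<dots> = (a n + 1) * B^n" by simp
  also have "\<dots> \<le> B * B^n" using h2 by (rule mult_right_mono) simp
  finally show ?case by simp
qed

lemma digits_unique:
  fixes a b :: "nat \<Rightarrow> nat" and B :: nat
  shows "(\<forall>i<n. a i < B) \<Longrightarrow> (\<forall>i<n. b i < B) \<Longrightarrow>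
     (\<Sum>i<n. a i * B^i) = (\<Sum>i<n. b i * B^i) \<Longrightarrow> \<forall>i<n. a i = b i"
proof (induction n)
  case 0 then show ?case by simp
next
  case (Suc n)
  define A where "A = (\<Sum>i<n. a i * B^i)"
  define A' where "A' = (\<Sum>i<n. b i * B^i)"
  have hA: "A < B^n" unfolding A_def using Suc.prems by (intro digits_lt) auto
  have hA': "A' < B^n" unfolding A'_def using Suc.prems by (intro digits_lt) auto
  have eq: "A + a n * B^n = A' + b n * B^n" using Suc.prems(3) by (simp add: A_def A'_def)
  have pos: "B^n > 0" using le0 hA by (rule le_less_trans)
  have d1: "(A + a n * B^n) div B^n = a n" using hA pos by (simp only: div_mult_self1[OF pos[THEN gr_implies_not0]] div_less)
  have d2: "(A' + b n * B^n) div B^n = b n" using hA' pos by (simp only: div_mult_self1[OF pos[THEN gr_implies_not0]] div_less)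
  have an: "a n = b n" using d1 d2 unfolding eq by simp
  have m1: "(A + a n * B^n) mod B^n = A" using hA by (simp only: mod_mult_self1 mod_less)
  have m2: "(A' + b n * B^n) mod B^n = A'" using hA' by (simp only: mod_mult_self1 mod_less)
  have "A = A'" using m1 m2 unfolding eq by simp
  then have "\<forall>i<n. a i = b i" using Suc.prems by (intro Suc.IH) (auto simp: A_def A'_def)
  then show ?case using an by (auto simp: less_Suc_eq)
qed


theorem lemma6p8:
  fixes s j B :: nat
  assumes "1 \<le> j" and "j \<le> s" and "j < B"
  defines "d \<equiv> 4 * s * (\<Sum>i = 1..j+1. B ^ i)"
  shows "\<exists>Q::nat. \<forall>q\<ge>Q. \<exists>x :: nat \<Rightarrow> nat.
           \<forall>a :: nat \<Rightarrow> nat. (\<forall>i<s. a i < B) \<longrightarrow> (\<forall>c<B.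
             ((\<exists>i<s. a i \<noteq> 0) \<longrightarrow>
                real q / real d < real (\<Sum>i<s. a i * x i) - real c) \<and>
             real (\<Sum>i<s. a i * x i) - real c < real q * real d \<and>
             (real (\<Sum>i<s. a i * x i) - real c = real q \<longleftrightarrow>
                ((\<forall>i<s. a i = (if i < j then 1 else 0)) \<and> c = 0)))"
proof -
  have B2: "B \<ge> 2" using assms by simp
  have s1: "s \<ge> 1" using assms by simp
  define T where "T = (\<Sum>i<j. B^i)"
  have BiT: "B^i \<le> T" if "i < j" for i
    unfolding T_def by (rule member_le_sum) (use that in auto)
  have T1: "T \<ge> 1" using BiT[of 0] assms by simp
  define X where "X = (\<Sum>i = 1..j+1. B ^ i)"
  have dX: "d = 4 * s * X" by (simp add: d_def X_def)
  have XT: "T \<le> X"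
  proof -
    have "T \<le> (\<Sum>i = 0..j. B ^ i)" unfolding T_def
      by (rule sum_mono2) auto
    also have "\<dots> \<le> (\<Sum>i = 0..j. B ^ Suc i)"
      by (rule sum_mono) (use B2 in auto)
    also have "\<dots> = X" unfolding X_def
      using sum.atLeast_Suc_atMost_Suc_shift[of "\<lambda>i. B^i" 0 j] by (simp add: comp_def)
    finally show ?thesis .
  qed
  have XB: "B + B^2 \<le> X"
  proof -
    have "(\<Sum>i\<in>{1,2}. B ^ i) \<le> X" unfolding X_def
      by (rule sum_mono2) (use assms in auto)
    then show ?thesis by simp
  qed
  have "X \<le> s * X" using s1 by simp
  then have d2T: "d \<ge> 2 * T" using dX XT by linarith
  define Q where "Q = T * (B*T + T + B + 2) + 2*T*(B+1) + 1"
  show ?thesis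
  proof (intro exI[of _ Q] allI impI)
    fix q assume qQ: "Q \<le> q"
    define m where "m = q div T"
    define r where "r = q mod T"
    have qmr: "q = m * T + r" unfolding m_def r_def by simp
    have rT: "r < T" unfolding r_def using T1 by simp
    have mbig: "m \<ge> B*T + T + B + 2"
    proof -
      have "T * (B*T + T + B + 2) \<le> q" using qQ unfolding Q_def by linarith
      then have "T * (B*T + T + B + 2) div T \<le> q div T" by (rule div_le_mono)
      then show ?thesis using T1 by (simp add: m_def)
    qed
    have q2: "2*T*(B+1) \<le> q" using qQ unfolding Q_def by linarith
    have q1: "q \<ge> 1" using qQ unfolding Q_def by linarith
    have "m \<le> m * T" using T1 by simp
    then have mq: "m \<le> q" using qmr by linarith
    define x where "x = (\<lambda>i. if i = 0 then m + r else if i < j then m * B^i else q + B)"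
    have xle: "x i \<le> q + B" for i
    proof -
      have "m * B^i \<le> q" if "i < j"
      proof -
        have "m * B^i \<le> m * T" using BiT[OF that] by simp
        then show ?thesis using qmr by linarith
      qed
      moreover have "m + r \<le> q" using qmr \<open>m \<le> m * T\<close> by linarith
      ultimately show ?thesis unfolding x_def by auto
    qed
    have xge: "x i \<ge> m" for i
    proof -
      have "m \<le> m * B^i" using B2 by simp
      then show ?thesis unfolding x_def using mq by auto
    qed
    show "\<exists>x :: nat \<Rightarrow> nat.
           \<forall>a :: nat \<Rightarrow> nat. (\<forall>i<s. a i < B) \<longrightarrow> (\<forall>c<B.
             ((\<exists>i<s. a i \<noteq> 0) \<longrightarrow>
                real q / real d < real (\<Sum>i<s. a i * x i) - real c) \<and>
             real (\<Sum>i<s. a i * x i) - real c < real q * real d \<and>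
             (real (\<Sum>i<s. a i * x i) - real c = real q \<longleftrightarrow>
                ((\<forall>i<s. a i = (if i < j then 1 else 0)) \<and> c = 0)))"
    proof -
      have main: "((\<exists>i<s. a i \<noteq> 0) \<longrightarrow> real q / real d < real (\<Sum>i<s. a i * x i) - real c) \<and>
             real (\<Sum>i<s. a i * x i) - real c < real q * real d \<and>
             (real (\<Sum>i<s. a i * x i) - real c = real q \<longleftrightarrow>
                ((\<forall>i<s. a i = (if i < j then 1 else 0)) \<and> c = 0))"
        if aB: "\<forall>i<s. a i < B" and cB: "c < B" for a :: "nat \<Rightarrow> nat" and c :: nat
      proof -
      define S where "S = (\<Sum>i<s. a i * x i)"
      have P1: "(\<exists>i<s. a i \<noteq> 0) \<longrightarrow> real q / real d < real (\<Sum>i<s. a i * x i) - real c"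
      proof
        assume "\<exists>i<s. a i \<noteq> 0"
        then obtain i where i: "i < s" "a i \<noteq> 0" by auto
        have "x i \<le> a i * x i" using i by simp
        also have "a i * x i \<le> S" unfolding S_def
          by (rule member_le_sum[where f="\<lambda>i. a i * x i"]) (use i in auto)
        finally have Sm: "m \<le> S" using xge[of i] by linarith
        have dpos: "real d > 0" using d2T T1 by simp
        have h1: "real S - real c \<ge> real m - real B" using Sm cB by simp
        have h2: "real m - real B > 0" using mbig by simp
        have h3: "real d * (real S - real c) \<ge> 2 * real T * (real m - real B)"
        proof -
          have "real d * (real S - real c) \<ge> real d * (real m - real B)"
            using h1 dpos by (simp add: mult_left_mono)
          moreover have "real d * (real m - real B) \<ge> 2 * real T * (real m - real B)"
            using d2T h2 by (intro mult_right_mono) auto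
          ultimately show ?thesis by linarith
        qed
        have "q < m * T + T" using qmr rT by linarith
        then have h4: "real m * real T + real T > real q"
          by (simp only: of_nat_mult[symmetric] of_nat_add[symmetric] of_nat_less_iff)
        have "real (2*T*(B+1)) \<le> real q" using q2 by (simp only: of_nat_le_iff)
        then have h5: "2 * real T * (real B + 1) \<le> real q" by (simp add: algebra_simps)
        have "real q < real d * (real S - real c)" using h3 h4 h5
          by (simp add: algebra_simps)
        then show "real q / real d < real (\<Sum>i<s. a i * x i) - real c"
          using dpos by (simp add: S_def divide_less_eq mult.commute)
      qed
      have P2: "real (\<Sum>i<s. a i * x i) - real c < real q * real d"
      proof -
        have "S \<le> (\<Sum>i<s. B * (q + B))" unfolding S_def
          proof (rule sum_mono)
          fix i assume "i \<in> {..<s}"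
          then have "a i \<le> B" using aB by (simp add: less_imp_le)
          then show "a i * x i \<le> B * (q + B)" using xle[of i] by (rule mult_le_mono)
        qed
        then have SS: "S \<le> s * (B * (q + B))" by simp
        have "s * (B * (q + B)) = s*B*q + s*B*B" by (simp add: algebra_simps)
        also have "\<dots> \<le> s*B*q + s*B*B*q" using q1 by simp
        also have "\<dots> < 4*s*B*q + 4*s*(B*B)*q" using s1 B2 q1 by simp
        also have "\<dots> = 4 * s * (B + B^2) * q" by (simp add: algebra_simps power2_eq_square)
        also have "\<dots> \<le> q * d" using XB by (simp add: dX)
        finally have "S < q * d" using SS by linarith
        then have "real S < real q * real d" by (simp only: of_nat_mult[symmetric] of_nat_less_iff)
        then show ?thesis by (simp add: S_def)
      qed
      have P3: "real (\<Sum>i<s. a i * x i) - real c = real q \<longleftrightarrow>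
                ((\<forall>i<s. a i = (if i < j then 1 else 0)) \<and> c = 0)"
      proof -
        define N where "N = (\<Sum>i<j. a i * B^i)"
        define R where "R = (\<Sum>i\<in>{j..<s}. a i)"
        have split: "S = (\<Sum>i<j. a i * x i) + (\<Sum>i\<in>{j..<s}. a i * x i)"
          unfolding S_def using sum.atLeastLessThan_concat[of 0 j s "\<lambda>i. a i * x i"] assms
          by (simp add: atLeast0LessThan)
        have p1: "(\<Sum>i<j. a i * x i) = m * N + a 0 * r"
        proof -
          have "(\<Sum>i<j. a i * x i) = (\<Sum>i<j. m * (a i * B^i) + (if i = 0 then a 0 * r else 0))"
            by (rule sum.cong) (auto simp: x_def algebra_simps)
          also have "\<dots> = m * N + a 0 * r" using assms
            by (simp add: sum.distrib sum_distrib_left N_def)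
          finally show ?thesis .
        qed
        have p2: "(\<Sum>i\<in>{j..<s}. a i * x i) = (q + B) * R"
          unfolding R_def sum_distrib_left
          by (rule sum.cong) (use assms in \<open>auto simp: x_def\<close>)
        have Sform: "S = m * N + a 0 * r + (q + B) * R" using split p1 p2 by simp
        have NT: "T = (\<Sum>i<j. 1 * B^i)" by (simp add: T_def)
        have iff: "real S - real c = real q \<longleftrightarrow> S = q + c" by linarith
        show ?thesis
        proof
          assume "real (\<Sum>i<s. a i * x i) - real c = real q"
          then have Sq: "S = q + c" using iff by (simp add: S_def)
          have R0: "R = 0"
          proof (rule ccontr)
            assume "R \<noteq> 0"
            then have "(q + B) * 1 \<le> (q + B) * R" by (intro mult_le_mono2) simp
            then have "S \<ge> q + B" using Sform by (simp only: mult_1_right)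
            then show False using Sq cB by simp
          qed
          have aj: "\<forall>i<s. j \<le> i \<longrightarrow> a i = 0" using R0 unfolding R_def by simp
          have eq1: "m * N + a 0 * r = m * T + r + c" using Sq Sform R0 qmr by simp
          have a0B: "a 0 * r < m"
          proof -
            have "a 0 * r \<le> B * T" using aB assms rT
              by (intro mult_le_mono) auto
            then show ?thesis using mbig by simp
          qed
          have NeqT: "N = T"
          proof (rule ccontr)
            assume "N \<noteq> T"
            then consider "N \<ge> T + 1" | "N + 1 \<le> T" by linarith
            then show False
            proof cases
              case 1
              then have "m * (T + 1) \<le> m * N" by (rule mult_le_mono2)
              then show False using eq1 mbig rT cB by (simp add: algebra_simps)
            next
              case 2
              then have "m * (N + 1) \<le> m * T" by (rule mult_le_mono2)
              then show False using eq1 a0B by (simp add: algebra_simps)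
            qed
          qed
          have digs: "\<forall>i<j. a i = 1"
            using digits_unique[of j a B "\<lambda>_. 1"] aB assms NeqT
            unfolding N_def NT by auto
          then have "a 0 = 1" using assms by simp
          then have c0: "c = 0" using eq1 NeqT by simp
          show "(\<forall>i<s. a i = (if i < j then 1 else 0)) \<and> c = 0"
            using digs aj c0 by auto
        next
          assume H: "(\<forall>i<s. a i = (if i < j then 1 else 0)) \<and> c = 0"
          have "N = T" unfolding N_def T_def
            by (rule sum.cong) (use H assms in auto)
          moreover have "R = 0" unfolding R_def using H by simp
          moreover have "a 0 = 1" using H assms by simp
          ultimately have "S = q" using Sform qmr by simp
          then show "real (\<Sum>i<s. a i * x i) - real c = real q" using H by (simp add: S_def)
        qed
      qed
      show "((\<exists>i<s. a i \<noteq> 0) \<longrightarrow> real q / real d < real (\<Sum>i<s. a i * x i) - real c) \<and>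
             real (\<Sum>i<s. a i * x i) - real c < real q * real d \<and>
             (real (\<Sum>i<s. a i * x i) - real c = real q \<longleftrightarrow>
                ((\<forall>i<s. a i = (if i < j then 1 else 0)) \<and> c = 0))"
        using P1 P2 P3 by blast
      qed
      show ?thesis using main by blast
    qed
  qed
qed

end
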